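(* Let ${\mathbf{x}}^* \in \mathbb{R}^n$, ${\mathbf{x}}^* \geq 0$, with $\mathcal{J} = \mathrm{supp}({\mathbf{x}}^* )$, and assume there is a vector ${\mathbf{c}}$ with $$\frac{P {\mathbf{e}}_j}{\| P {\mathbf{e}}_j \|_2} \cdot {\mathbf{c}} = 1 \ \ \forall j \in \mathcal{J}, \qquad \frac{P {\mathbf{e}}_i}{\| P {\mathbf{e}}_i \|_2} \cdot {\mathbf{c}} < 1 \ \ \forall i \in \mathcal{J}^c.$$ Let $s \in [\|{\mathbf{x}}^*\|_\infty, \infty]$. If $A$ is injective on the set $\{ {\mathbf{z}} \in \mathbb{R}^n : \mathrm{supp}({\mathbf{z}}) \subseteq \mathcal{J},\ 0 \leq {\mathbf{z}} \leq s \}$, then ${\mathbf{x}}^*$ is the unique solution of $$\min_{0 \leq {\mathbf{x}} \leq s} \| W {\mathbf{x}} \|_1 \quad \text{subject to} \quad A {\mathbf{x}} = A {\mathbf{x}}^*.$$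
   Context: $A \in \mathbb{R}^{m\times n}$ is a matrix, $A^\dagger$ its Moore–Penrose pseudoinverse, and $P = A^\dagger A$ the orthogonal projection onto $\mathcal{N}(A)^\perp$. ${\mathbf{e}}_1,\dots,{\mathbf{e}}_n$ are the standard unit vectors, assumed not to lie in $\mathcal{N}(A)$, so $w_i := \|P{\mathbf{e}}_i\|_2 > 0$; $W = \mathrm{diag}(w_1,\dots,w_n)$. Inequalities between vectors and scalars are componentwise; $s=\infty$ means only the constraint ${\mathbf{x}}\ge 0$. *)

theory Defs
  imports "HOL-Analysis.Analysis" "HOL-Library.Extended_Real"
begin

text \<open>Moore--Penrose pseudoinverse, defined by the four Penrose conditions.\<close>
definition is_pinv :: "real^'n^'m \<Rightarrow> real^'m^'n \<Rightarrow> bool" where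
  "is_pinv A X \<longleftrightarrow> A ** X ** A = A \<and> X ** A ** X = X \<and>
     transpose (A ** X) = A ** X \<and> transpose (X ** A) = X ** A"

definition pinv :: "real^'n^'m \<Rightarrow> real^'m^'n" where
  "pinv A = (THE X. is_pinv A X)"

text \<open>P = A^+ A, orthogonal projection onto the orthogonal complement of the null space.\<close>
definition projP :: "real^'n^'m \<Rightarrow> real^'n^'n" where
  "projP A = pinv A ** A"

text \<open>Weights w_i = norm (P e_i).\<close>
definition wt :: "real^'n^'m \<Rightarrow> 'n \<Rightarrow> real" where
  "wt A i = norm (projP A *v axis i 1)"

definition supp :: "real^'n \<Rightarrow> 'n set" where
  "supp x = {i. x $ i \<noteq> 0}"

text \<open>Box constraint 0 <= x <= s, with s = \<infinity> meaning only x >= 0.\<close>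
definition box :: "ereal \<Rightarrow> (real^'n) set" where
  "box s = {x. \<forall>i. 0 \<le> x $ i \<and> ereal (x $ i) \<le> s}"

text \<open>Weighted l1 objective, norm (W x)_1.\<close>
definition wl1 :: "real^'n^'m \<Rightarrow> real^'n \<Rightarrow> real" where
  "wl1 A x = (\<Sum>i\<in>UNIV. \<bar>wt A i * x $ i\<bar>)"

definition supnorm :: "real^'n \<Rightarrow> real" where
  "supnorm x = Max (range (\<lambda>i. \<bar>x $ i\<bar>))"

end

theory Submission imports Defs begin

lemma sym_transpose:
  fixes M :: "real^'n^'n"
  assumes "\<And>y z. (M *v y) \<bullet> z = y \<bullet> (M *v z)"
  shows "transpose M = M"
proof -
  have "transpose M *v y = M *v y" for y
  proof -
    have "(transpose M *v y - M *v y) \<bullet> z = 0" for z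
      using assms[of y z] by (simp add: inner_diff_left dot_lmul_matrix)
    then show ?thesis by (metis inner_eq_zero_iff eq_iff_diff_eq_0)
  qed
  then show ?thesis by (simp add: matrix_eq)
qed

lemma pinv_unique:
  assumes X: "is_pinv A X" and Y: "is_pinv A Y"
  shows "X = Y"
proof -
  from X have x1: "A ** X ** A = A" and x2: "X ** A ** X = X" and x3: "transpose (A ** X) = A ** X"
    and x4: "transpose (X ** A) = X ** A" by (auto simp: is_pinv_def)
  from Y have y1: "A ** Y ** A = A" and y2: "Y ** A ** Y = Y" and y3: "transpose (A ** Y) = A ** Y"
    and y4: "transpose (Y ** A) = Y ** A" by (auto simp: is_pinv_def)
  have "X = X ** (A ** X)" using x2 by (simp add: matrix_mul_assoc)
  also have "\<dots> = X ** (transpose X ** transpose A)" using x3 by (simp add: matrix_transpose_mul)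
  also have "\<dots> = X ** (transpose X ** transpose (A ** Y ** A))" using y1 by simp
  also have "\<dots> = X ** (transpose (A ** X) ** transpose (A ** Y))"
    by (simp add: matrix_transpose_mul matrix_mul_assoc)
  also have "\<dots> = X ** A ** Y" using x3 y3 x1 by (simp add: matrix_mul_assoc)
  finally have 1: "X = X ** A ** Y" .
  have "Y = (Y ** A) ** Y" using y2 by simp
  also have "\<dots> = (transpose A ** transpose Y) ** Y" using y4 by (simp add: matrix_transpose_mul)
  also have "\<dots> = (transpose (A ** X ** A) ** transpose Y) ** Y" using x1 by simp
  also have "\<dots> = (transpose (X ** A) ** transpose (Y ** A)) ** Y"
    by (simp add: matrix_transpose_mul matrix_mul_assoc)
  also have "\<dots> = X ** A ** Y" using x4 y4 y2 by (metis matrix_mul_assoc)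
  finally show ?thesis using 1 by simp
qed

lemma pinv_exists: "\<exists>X. is_pinv (A::real^'n^'m) X"
proof -
  define N where "N = {x::real^'n. A *v x = 0}"
  define R where "R = {y::real^'n. \<forall>x\<in>N. orthogonal x y}"
  have subN: "subspace N" unfolding N_def subspace_def
    by (simp add: matrix_vector_right_distrib matrix_vector_mult_scaleR)
  have subR: "subspace R" unfolding R_def by (rule subspace_orthogonal_to_vectors)
  have dec: "\<exists>r\<in>R. x - r \<in> N" for x
  proof -
    obtain y z where y: "y \<in> span N" and z: "\<And>w. w \<in> span N \<Longrightarrow> orthogonal z w" and xyz: "x = y + z"
      using orthogonal_subspace_decomp_exists[of N x] by blast
    have "z \<in> R" unfolding R_def using z span_base orthogonal_commute by blast
    moreover have "span N = N" using subN by (simp add: span_eq_iff)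
    then have "x - z \<in> N" using y xyz by (metis add_diff_cancel_right')
    ultimately show ?thesis by blast
  qed
  have injR: "inj_on ((*v) A) (span R)"
  proof (rule inj_onI)
    fix r1 r2 assume r1: "r1 \<in> span R" and r2: "r2 \<in> span R" and eq: "A *v r1 = A *v r2"
    have "r1 - r2 \<in> R" using r1 r2 subR by (metis span_eq_iff subspace_diff)
    moreover have "r1 - r2 \<in> N" using eq by (simp add: N_def matrix_vector_mult_diff_distrib)
    ultimately have "orthogonal (r1 - r2) (r1 - r2)" unfolding R_def by blast
    then show "r1 = r2" by (simp add: orthogonal_self)
  qed
  obtain g where g_rng: "range g \<subseteq> span R" and g_lin: "linear g"
      and g_inv: "\<forall>x\<in>span R. g (A *v x) = x"
    using linear_inj_on_left_inverse[OF matrix_vector_mul_linear injR] by blast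
  have gA: "g (A *v x) \<in> R \<and> x - g (A *v x) \<in> N" for x
  proof -
    obtain r where r: "r \<in> R" "x - r \<in> N" using dec by blast
    have "A *v x = A *v r" using r(2) by (simp add: N_def matrix_vector_mult_diff_distrib)
    moreover have "g (A *v r) = r" using g_inv r(1) span_base by blast
    ultimately show ?thesis using r by simp
  qed
  define V where "V = range ((*v) A)"
  have subV: "subspace V" unfolding V_def subspace_def
  proof (intro conjI ballI allI)
    show "0 \<in> range ((*v) A)" by (metis matrix_vector_mult_0_right rangeI)
  next
    fix x y assume "x \<in> range ((*v) A)" "y \<in> range ((*v) A)"
    then obtain a b where "x = A *v a" "y = A *v b" by blast
    then have "x + y = A *v (a + b)" by (simp add: matrix_vector_right_distrib)
    then show "x + y \<in> range ((*v) A)" by blast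
  next
    fix c :: real and x assume "x \<in> range ((*v) A)"
    then obtain a where "x = A *v a" by blast
    then have "c *\<^sub>R x = A *v (c *\<^sub>R a)" by (simp add: matrix_vector_mult_scaleR)
    then show "c *\<^sub>R x \<in> range ((*v) A)" by blast
  qed
  obtain B where BV: "B \<subseteq> V" and Borth: "pairwise orthogonal B"
    and Bn: "\<And>x. x \<in> B \<Longrightarrow> norm x = 1" and Bind: "independent B" and Bspan: "span B = V"
    using orthonormal_basis_subspace[OF subV] by blast
  have finB: "finite B" using Bind independent_imp_finite by blast
  define pr where "pr y = (\<Sum>b\<in>B. (y \<bullet> b) *\<^sub>R b)" for y :: "real^'m"
  have pr_V: "pr y \<in> V" for y
    proof -
    have "(\<Sum>b\<in>B. (y \<bullet> b) *\<^sub>R b) \<in> span B"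
      by (intro span_sum span_mul span_base)
    then show ?thesis using Bspan by (simp add: pr_def)
  qed
  have pr_orthB: "(y - pr y) \<bullet> b = 0" if b: "b \<in> B" for y b
  proof -
    have "pr y \<bullet> b = (\<Sum>b'\<in>B. (y \<bullet> b') * (b' \<bullet> b))"
      by (simp add: pr_def inner_sum_left)
    also have "\<dots> = (y \<bullet> b) * (b \<bullet> b) + (\<Sum>b'\<in>B-{b}. (y \<bullet> b') * (b' \<bullet> b))"
      by (rule sum.remove[OF finB b])
    also have "(\<Sum>b'\<in>B-{b}. (y \<bullet> b') * (b' \<bullet> b)) = 0"
      using Borth b by (intro sum.neutral) (auto simp: pairwise_def orthogonal_def)
    also have "b \<bullet> b = 1" using Bn[OF b] by (metis power2_norm_eq_inner power_one)
    finally show ?thesis by (simp add: inner_diff_left)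
  qed
  have pr_orthV: "(y - pr y) \<bullet> v = 0" if v: "v \<in> V" for y v
  proof -
    have "v \<in> span B" using v Bspan by simp
    then have "orthogonal (y - pr y) v"
      by (rule orthogonal_to_span) (simp add: orthogonal_def pr_orthB)
    then show ?thesis by (simp add: orthogonal_def)
  qed
  have pr_id: "pr v = v" if v: "v \<in> V" for v
  proof -
    have "v - pr v \<in> V" using v pr_V subV by (simp add: subspace_diff)
    then have "(v - pr v) \<bullet> (v - pr v) = 0" using pr_orthV by blast
    then show ?thesis by simp
  qed
  have pr_sym: "pr y \<bullet> z = y \<bullet> pr z" for y z
    unfolding pr_def inner_sum_left inner_sum_right by (simp add: inner_commute mult.commute)
  have pr_lin: "linear pr"
    by (rule linearI) (simp_all add: pr_def inner_add_left scaleR_add_left sum.distrib scaleR_sum_right)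
  define X where "X = matrix (g \<circ> pr)"
  have Xv: "X *v y = g (pr y)" for y
    unfolding X_def using linear_compose[OF pr_lin g_lin] by (simp add: matrix_works)
  have AgV: "A *v g v = v" if vV: "v \<in> V" for v
  proof -
    obtain x where x: "v = A *v x" using vV V_def by blast
    have "x - g (A *v x) \<in> N" using gA by blast
    then show ?thesis using x by (simp add: N_def matrix_vector_mult_diff_distrib)
  qed
  have AXv: "(A ** X) *v y = pr y" for y
    unfolding matrix_vector_mul_assoc[symmetric] by (simp add: Xv AgV pr_V)
  have c1: "A ** X ** A = A"
    unfolding matrix_eq
    unfolding matrix_vector_mul_assoc[symmetric] by (simp add: Xv AgV pr_V pr_id V_def)
  have c2: "X ** A ** X = X"
    unfolding matrix_eq
    unfolding matrix_vector_mul_assoc[symmetric] by (simp add: Xv AgV pr_V pr_id)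
  have c3: "transpose (A ** X) = A ** X"
    by (rule sym_transpose) (simp add: AXv pr_sym)
  have c4: "transpose (X ** A) = X ** A"
  proof (rule sym_transpose)
    fix y z
    define ry where "ry = g (A *v y)"
    define rz where "rz = g (A *v z)"
    have "ry \<in> R" "y - ry \<in> N" "rz \<in> R" "z - rz \<in> N" using gA ry_def rz_def by auto
    then have o1: "ry \<bullet> (z - rz) = 0" and o2: "(y - ry) \<bullet> rz = 0"
      unfolding R_def orthogonal_def by (auto simp: inner_commute)
    have "((X ** A) *v y) \<bullet> z = ry \<bullet> rz"
      using o1 unfolding matrix_vector_mul_assoc[symmetric] by (simp add: Xv ry_def pr_id V_def inner_diff_right)
    moreover have "y \<bullet> ((X ** A) *v z) = ry \<bullet> rz"
      using o2 unfolding matrix_vector_mul_assoc[symmetric] by (simp add: Xv rz_def pr_id V_def inner_diff_left)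
    ultimately show "((X ** A) *v y) \<bullet> z = y \<bullet> ((X ** A) *v z)" by simp
  qed
  show ?thesis using c1 c2 c3 c4 unfolding is_pinv_def by blast
qed


lemma is_pinv_pinv: "is_pinv A (pinv A)"
proof -
  have "\<exists>!X. is_pinv A X" using pinv_exists pinv_unique by blast
  then show ?thesis unfolding pinv_def by (rule theI')
qed

lemma projP_AXA: "A ** pinv A ** A = A"
  using is_pinv_pinv unfolding is_pinv_def by blast

lemma projP_apply: "projP A *v x = pinv A *v (A *v x)"
  by (simp add: projP_def matrix_vector_mul_assoc)

lemma wt_pos:
  assumes "A *v axis i 1 \<noteq> 0"
  shows "wt A i > 0"
proof -
  have "A *v (projP A *v axis i 1) = (A ** pinv A ** A) *v axis i 1"
    by (simp add: projP_apply matrix_vector_mul_assoc matrix_mul_assoc)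
  also have "\<dots> = A *v axis i 1" by (simp add: projP_AXA)
  finally have "projP A *v axis i 1 \<noteq> 0" using assms by auto
  then show ?thesis unfolding wt_def by simp
qed

lemma inner_matvec_expand:
  fixes P :: "real^'n^'n"
  shows "(P *v x) \<bullet> c = (\<Sum>i\<in>UNIV. x $ i * ((P *v axis i 1) \<bullet> c))"
proof -
  have "(P *v x) \<bullet> c = (\<Sum>k\<in>UNIV. (\<Sum>i\<in>UNIV. P $ k $ i * x $ i) * c $ k)"
    by (simp add: inner_vec_def matrix_vector_mult_def mult.commute)
  also have "\<dots> = (\<Sum>k\<in>UNIV. \<Sum>i\<in>UNIV. x $ i * (P $ k $ i * c $ k))"
    by (simp add: sum_distrib_left sum_distrib_right mult_ac)
  also have "\<dots> = (\<Sum>i\<in>UNIV. \<Sum>k\<in>UNIV. x $ i * (P $ k $ i * c $ k))"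
    by (rule sum.swap)
  also have "\<dots> = (\<Sum>i\<in>UNIV. x $ i * ((P *v axis i 1) \<bullet> c))"
    by (simp add: matrix_vector_mult_basis column_def inner_vec_def sum_distrib_left mult.commute)
  finally show ?thesis .
qed


theorem corollary1:
  fixes A :: "real^'n^'m" and xs c :: "real^'n" and s :: ereal
  assumes not_null: "\<forall>i. A *v axis i 1 \<noteq> 0"
    and xs_nonneg: "\<forall>i. 0 \<le> xs $ i"
    and c_on: "\<forall>j\<in>supp xs. ((1 / wt A j) *\<^sub>R (projP A *v axis j 1)) \<bullet> c = 1"
    and c_off: "\<forall>i\<in>- supp xs. ((1 / wt A i) *\<^sub>R (projP A *v axis i 1)) \<bullet> c < 1"
    and s_ge: "ereal (supnorm xs) \<le> s"
    and inj: "inj_on (\<lambda>z. A *v z) {z. supp z \<subseteq> supp xs \<and> z \<in> box s}"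
  shows "xs \<in> box s \<and>
         (\<forall>x. x \<in> box s \<and> A *v x = A *v xs \<longrightarrow> wl1 A xs \<le> wl1 A x) \<and>
         (\<forall>x. x \<in> box s \<and> A *v x = A *v xs \<and> wl1 A x \<le> wl1 A xs \<longrightarrow> x = xs)"
proof -
  define w where "w i = wt A i" for i
  define d where "d i = (projP A *v axis i 1) \<bullet> c" for i
  have wpos: "w i > 0" for i
  proof -
    have "A *v axis i 1 \<noteq> 0" using not_null by blast
    then have "wt A i > 0" by (rule wt_pos)
    then show ?thesis unfolding w_def .
  qed
  have d_on: "d i = w i" if "i \<in> supp xs" for i
  proof -
    have "((1 / w i) *\<^sub>R (projP A *v axis i 1)) \<bullet> c = 1" using c_on that unfolding w_def by blast
    then have "(1 / w i) * d i = 1" unfolding d_def by (simp only: inner_scaleR_left)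
    then show ?thesis using wpos[of i] by (simp add: field_simps)
  qed
  have d_off: "d i < w i" if "i \<notin> supp xs" for i
  proof -
    have "((1 / w i) *\<^sub>R (projP A *v axis i 1)) \<bullet> c < 1" using c_off that unfolding w_def by blast
    then have "(1 / w i) * d i < 1" unfolding d_def by (simp only: inner_scaleR_left)
    then show ?thesis using wpos[of i] by (simp add: field_simps)
  qed
  have d_le: "d i \<le> w i" for i using d_on d_off by (cases "i \<in> supp xs") (auto intro: less_imp_le)
  have wl1_eq: "wl1 A x = (\<Sum>i\<in>UNIV. x $ i * w i)" if "\<forall>i. 0 \<le> x $ i" for x
    unfolding wl1_def
  proof (intro sum.cong refl)
    fix i
    have "0 < wt A i" using wpos[of i] unfolding w_def .
    moreover have "0 \<le> x $ i" using that by blast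
    ultimately show "\<bar>wt A i * x $ i\<bar> = x $ i * w i"
      unfolding w_def by (simp add: abs_mult mult.commute)
  qed
  have Pc: "(projP A *v x) \<bullet> c = (\<Sum>i\<in>UNIV. x $ i * d i)" for x
    unfolding d_def by (rule inner_matvec_expand)
  have xs_box: "xs \<in> box s"
    unfolding box_def
  proof (intro CollectI allI conjI)
    fix i
    show "0 \<le> xs $ i" using xs_nonneg by blast
    have "xs $ i \<le> supnorm xs" unfolding supnorm_def
      by (rule order_trans[OF abs_ge_self Max_ge]) auto
    then have "ereal (xs $ i) \<le> ereal (supnorm xs)" by simp
    then show "ereal (xs $ i) \<le> s" using s_ge by (rule order_trans)
  qed
  have xs_val: "(\<Sum>i\<in>UNIV. xs $ i * d i) = wl1 A xs"
    unfolding wl1_eq[OF xs_nonneg]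
  proof (intro sum.cong refl)
    fix i show "xs $ i * d i = xs $ i * w i"
      using d_on[of i] by (cases "i \<in> supp xs") (auto simp: supp_def)
  qed
  have key: "wl1 A xs + (\<Sum>i\<in>UNIV. x $ i * (w i - d i)) = wl1 A x"
    if xb: "x \<in> box s" and Ax: "A *v x = A *v xs" for x
  proof -
    have xn: "\<forall>i. 0 \<le> x $ i" using xb by (simp add: box_def)
    have "projP A *v x = projP A *v xs" using Ax by (simp add: projP_apply)
    then have "wl1 A xs = (\<Sum>i\<in>UNIV. x $ i * d i)" using Pc[of x] Pc[of xs] xs_val by simp
    then show ?thesis unfolding wl1_eq[OF xn]
      by (simp add: sum.distrib[symmetric] algebra_simps sum_subtractf)
  qed
  have nn: "0 \<le> x $ i * (w i - d i)" if xb: "x \<in> box s" for x i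
    using xb d_le[of i] by (simp add: box_def)
  show ?thesis
  proof (intro conjI allI impI)
    show "xs \<in> box s" by (rule xs_box)
  next
    fix x assume h: "x \<in> box s \<and> A *v x = A *v xs"
    have "0 \<le> (\<Sum>i\<in>UNIV. x $ i * (w i - d i))" using nn h by (intro sum_nonneg) blast
    then show "wl1 A xs \<le> wl1 A x" using key[of x] h by linarith
  next
    fix x assume h: "x \<in> box s \<and> A *v x = A *v xs \<and> wl1 A x \<le> wl1 A xs"
    have "(\<Sum>i\<in>UNIV. x $ i * (w i - d i)) \<le> 0" using key[of x] h by linarith
    moreover have "\<forall>i\<in>UNIV. 0 \<le> x $ i * (w i - d i)" using nn h by blast
    ultimately have z: "\<forall>i\<in>UNIV. x $ i * (w i - d i) = 0"
      using sum_nonneg_eq_0_iff[of UNIV "\<lambda>i. x $ i * (w i - d i)"] by (simp add: sum_nonneg antisym)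
    have "supp x \<subseteq> supp xs"
    proof
      fix i assume "i \<in> supp x"
      then have "x $ i \<noteq> 0" by (simp add: supp_def)
      moreover have "x $ i * (w i - d i) = 0" using z by blast
      ultimately have "w i - d i = 0" by simp
      show "i \<in> supp xs"
      proof (rule ccontr)
        assume "i \<notin> supp xs"
        then have "d i < w i" by (rule d_off)
        with \<open>w i - d i = 0\<close> show False by simp
      qed
    qed
    then show "x = xs"
      using inj h xs_box by (auto simp: inj_on_def)
  qed
qed

end
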